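(* Let $\pi$ be a stationary deterministic memoryless policy, $\hat q:\mathcal{S}\times\mathcal{A}\to\mathbb{R}$ any function, $\omega>0$ and $\mathcal{S}_{\text{fix}}\subseteq\mathcal{S}$. Let $\pi'=\pi_{\hat q,\pi,\mathcal{S}_{\text{fix}}}$ be the CAPI update. Assume that $|\hat q(s,a)-q^\pi(s,a)|\le\omega$ for all $s\in\mathcal{S}\setminus\mathcal{S}_{\text{fix}}$ and all $a\in\mathcal{A}$. Then $v^{\pi'}(s)\ge v^\pi(s)$ for every $s\in\mathcal{S}$.
   Context: An MDP is $M=(\mathcal{S},\mathcal{A},\mathcal{Q})$ with measurable state space $\mathcal{S}$, finite action set $\mathcal{A}=(\mathcal{A}_1,\dots,\mathcal{A}_{|\mathcal{A}|})$ (with a fixed ordering), and transition-reward kernel $\mathcal{Q}:\mathcal{S}\times\mathcal{A}\to\mathcal{M}_1(\mathcal{S}\times[0,1])$ with marginals $P(\cdot|s,a)$ (next state) and $\mathcal{R}(\cdot|s,a)$ (reward), $r(s,a)$ the mean reward; discount factor $\gamma\in(0,1)$. For a stationary memoryless policy $\pi$, $v^\pi(s)=\mathbb{E}_{\pi,s}[\sum_{t\ge0}\gamma^tR_t]$ and $q^\pi(s,a)=\mathbb{E}_{\pi,s,a}[\sum_{t\ge0}\gamma^tR_t]$ (trajectory started at $s$, resp. with first action $a$, then following $\pi$). For a deterministic policy, $\pi(s)$ denotes the chosen action. CAPI update: given $\hat q$, a deterministic policy $\pi$, $\omega>0$ and $\mathcal{S}_{\text{fix}}\subseteq\mathcal{S}$,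 the deterministic policy $\pi_{\hat q,\pi,\mathcal{S}_{\text{fix}}}$ is defined by $\pi_{\hat q,\pi,\mathcal{S}_{\text{fix}}}(s)=\arg\max_{a\in\mathcal{A}}\hat q(s,a)$ if $s\notin\mathcal{S}_{\text{fix}}$ and $\hat q(s,\pi(s))+\omega<\max_{a}\hat q(s,a)-\omega$, and $=\pi(s)$ otherwise; the argmax breaks ties by choosing the action $\mathcal{A}_i$ with the smallest index $i$. *)

theory Defs
  imports "HOL-Probability.Probability"
begin

(* Actions: a finite type 'b whose
   linear order is the fixed ordering A_1 < ... < A_|A|.
   The transition-reward kernel Q s a is a probability measure on S x [0,1]
   (realised as a probability measure on S \<Otimes> borel concentrated on space S x {0..1}). *)

definition mdp :: "'s measure \<Rightarrow> ('s \<Rightarrow> 'b \<Rightarrow> ('s \<times> real) measure) \<Rightarrow> bool" where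
  "mdp S Q \<longleftrightarrow>
     (\<forall>a. (\<lambda>s. Q s a) \<in> S \<rightarrow>\<^sub>M prob_algebra (S \<Otimes>\<^sub>M borel)) \<and>
     (\<forall>s\<in>space S. \<forall>a. emeasure (Q s a) (space S \<times> {0..1}) = 1)"

(* Law of (S_n, sum_{t<n} gamma^t R_t) along a trajectory started in s, where the action
   taken at time t in state x is act t x. *)
fun traj :: "'s measure \<Rightarrow> ('s \<Rightarrow> 'b \<Rightarrow> ('s \<times> real) measure) \<Rightarrow> real
      \<Rightarrow> (nat \<Rightarrow> 's \<Rightarrow> 'b) \<Rightarrow> 's \<Rightarrow> nat \<Rightarrow> ('s \<times> real) measure" where
  "traj S Q \<gamma> act s 0 = return (S \<Otimes>\<^sub>M borel) (s, 0)"
| "traj S Q \<gamma> act s (Suc n) =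
     Giry_Monad.bind (traj S Q \<gamma> act s n)
       (\<lambda>(x, g). distr (Q x (act n x)) (S \<Otimes>\<^sub>M borel) (\<lambda>(x', r). (x', g + \<gamma> ^ n * r)))"

definition vfun :: "'s measure \<Rightarrow> ('s \<Rightarrow> 'b \<Rightarrow> ('s \<times> real) measure) \<Rightarrow> real
      \<Rightarrow> ('s \<Rightarrow> 'b) \<Rightarrow> 's \<Rightarrow> real" where
  "vfun S Q \<gamma> \<pi> s = lim (\<lambda>n. \<integral>z. snd z \<partial>(traj S Q \<gamma> (\<lambda>t x. \<pi> x) s n))"

definition qfun :: "'s measure \<Rightarrow> ('s \<Rightarrow> 'b \<Rightarrow> ('s \<times> real) measure) \<Rightarrow> real
      \<Rightarrow> ('s \<Rightarrow> 'b) \<Rightarrow> 's \<Rightarrow> 'b \<Rightarrow> real" where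
  "qfun S Q \<gamma> \<pi> s a =
     lim (\<lambda>n. \<integral>z. snd z \<partial>(traj S Q \<gamma> (\<lambda>t x. if t = 0 then a else \<pi> x) s n))"

definition greedy :: "('s \<Rightarrow> 'b::{finite,linorder} \<Rightarrow> real) \<Rightarrow> 's \<Rightarrow> 'b" where
  "greedy qh s = (LEAST a. \<forall>b. qh s b \<le> qh s a)"

definition capi :: "('s \<Rightarrow> 'b::{finite,linorder} \<Rightarrow> real) \<Rightarrow> ('s \<Rightarrow> 'b) \<Rightarrow> real \<Rightarrow> 's set \<Rightarrow> 's \<Rightarrow> 'b" where
  "capi qh \<pi> \<omega> Sfix s =
     (if s \<notin> Sfix \<and> qh s (\<pi> s) + \<omega> < Max (range (qh s)) - \<omega> then greedy qh s else \<pi> s)"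

end

theory Submission
  imports Defs
begin

definition rr :: "('s \<Rightarrow> 'b \<Rightarrow> ('s \<times> real) measure) \<Rightarrow> 's \<Rightarrow> 'b \<Rightarrow> real" where
  "rr Q x b = (\<integral>z. snd z \<partial>Q x b)"
definition PP :: "('s \<Rightarrow> 'b \<Rightarrow> ('s \<times> real) measure) \<Rightarrow> 'b \<Rightarrow> ('s \<Rightarrow> real) \<Rightarrow> 's \<Rightarrow> real" where
  "PP Q b h x = (\<integral>z. h (fst z) \<partial>Q x b)"
primrec comp :: "('s \<Rightarrow> 'b \<Rightarrow> ('s \<times> real) measure) \<Rightarrow> real \<Rightarrow> (nat \<Rightarrow> 's \<Rightarrow> 'b) \<Rightarrow> nat \<Rightarrow> ('s \<Rightarrow> real) \<Rightarrow> 's \<Rightarrow> real" where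
  "comp Q \<gamma> act 0 h = h"
| "comp Q \<gamma> act (Suc n) h = comp Q \<gamma> act n (\<lambda>x. \<gamma>^n * rr Q x (act n x) + PP Q (act n x) h x)"
definition TT :: "('s \<Rightarrow> 'b \<Rightarrow> ('s \<times> real) measure) \<Rightarrow> real \<Rightarrow> ('s \<Rightarrow> 'b) \<Rightarrow> ('s \<Rightarrow> real) \<Rightarrow> 's \<Rightarrow> real" where
  "TT Q \<gamma> p h = (\<lambda>x. rr Q x (p x) + \<gamma> * PP Q (p x) h x)"

lemma integral_bind_AE:
  fixes f :: "_ \<Rightarrow> real"
  assumes f[measurable]: "f \<in> borel_measurable K"
    and N[measurable]: "N \<in> M \<rightarrow>\<^sub>M subprob_algebra K"
    and fin: "prob_space M"
    and bd: "AE x in M. AE y in N x. \<bar>f y\<bar> \<le> B"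
  shows "integral\<^sup>L (M \<bind> N) f = (\<integral>x. integral\<^sup>L (N x) f \<partial>M)"
proof -
  define f' where "f' y = max (-B) (min B (f y))" for y
  have clip: "\<bar>max (-B) (min B y)\<bar> \<le> \<bar>B\<bar>" for y :: real
    by (simp add: max_def min_def abs_if)
  have clip2: "\<bar>y\<bar> \<le> B \<Longrightarrow> max (-B) (min B y) = y" for y :: real
    by (simp add: max_def min_def abs_le_iff)
  have f'm[measurable]: "f' \<in> borel_measurable K" unfolding f'_def by measurable
  have "integral\<^sup>L (M \<bind> N) f = integral\<^sup>L (M \<bind> N) f'"
  proof (rule integral_cong_AE)
    show "f \<in> borel_measurable (M \<bind> N)" "f' \<in> borel_measurable (M \<bind> N)"
      using sets_bind[OF sets_kernel[OF N] prob_space.not_empty[OF fin]]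
      by (simp_all cong: measurable_cong_sets)
    have P: "Measurable.pred K (\<lambda>y. \<bar>f y\<bar> \<le> B)" by measurable
    have "AE y in M \<bind> N. \<bar>f y\<bar> \<le> B"
      using AE_bind[OF N P] bd by simp
    then show "AE y in M \<bind> N. f y = f' y" by eventually_elim (simp add: f'_def clip2)
  qed
  also have "\<dots> = (\<integral>x. integral\<^sup>L (N x) f' \<partial>M)"
    apply (rule integral_bind[where B="\<bar>B\<bar>" and B'=1])
        apply (rule f'm)
       apply (unfold f'_def, rule clip)
      apply (rule N)
    using fin apply (simp add: prob_space_def)
    apply (rule AE_I2)
    using subprob_space.subprob_emeasure_le_1[OF subprob_space_kernel[OF N]] by simp
  also have "\<dots> = (\<integral>x. integral\<^sup>L (N x) f \<partial>M)"
  proof (rule integral_cong_AE)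
    show "(\<lambda>x. integral\<^sup>L (N x) f') \<in> borel_measurable M" "(\<lambda>x. integral\<^sup>L (N x) f) \<in> borel_measurable M"
      by measurable
    show "AE x in M. integral\<^sup>L (N x) f' = integral\<^sup>L (N x) f"
      using bd AE_space
    proof eventually_elim
      case (elim x)
      have s: "sets (N x) = sets K" using sets_kernel[OF N elim(2)] .
      show ?case
        apply (rule integral_cong_AE)
        using s apply (simp_all cong: measurable_cong_sets)
        using elim(1) by eventually_elim (simp add: f'_def clip2)
    qed
  qed
  finally show ?thesis .
qed

locale M =
  fixes S :: "'s measure" and Q :: "'s \<Rightarrow> 'b::countable \<Rightarrow> ('s \<times> real) measure" and \<gamma> :: real
  assumes mdp: "mdp S Q" and g0: "0 < \<gamma>" and g1: "\<gamma> < 1"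
begin

lemma Qmeas: "(\<lambda>x. Q x b) \<in> S \<rightarrow>\<^sub>M prob_algebra (S \<Otimes>\<^sub>M borel)"
  using mdp unfolding mdp_def by auto

lemma Qpol: "p \<in> S \<rightarrow>\<^sub>M count_space UNIV \<Longrightarrow> (\<lambda>x. Q x (p x)) \<in> S \<rightarrow>\<^sub>M prob_algebra (S \<Otimes>\<^sub>M borel)"
  by (rule measurable_compose_countable[where f="\<lambda>b x. Q x b", OF Qmeas])

lemma Qsp: "x \<in> space S \<Longrightarrow> prob_space (Q x b)" "x \<in> space S \<Longrightarrow> sets (Q x b) = sets (S \<Otimes>\<^sub>M borel)"
  using measurable_space[OF Qmeas, of x b] by (auto simp: space_prob_algebra)

lemma Qspace: "x \<in> space S \<Longrightarrow> space (Q x b) = space S \<times> UNIV"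
  using sets_eq_imp_space_eq[OF Qsp(2)] by (simp add: space_pair_measure)

lemma QAE: assumes x: "x \<in> space S" shows "AE z in Q x b. fst z \<in> space S \<and> 0 \<le> snd z \<and> snd z \<le> 1"
proof -
  interpret prob_space "Q x b" using Qsp[OF x] by auto
  have e: "emeasure (Q x b) (space S \<times> {0..1}) = 1" using mdp x unfolding mdp_def by auto
  have "space S \<times> {0..1} \<in> sets (Q x b)" using Qsp(2)[OF x] by auto
  then have "prob (space S \<times> {0..1}) = 1" using e by (simp add: emeasure_eq_measure)
  then have "AE z in Q x b. z \<in> space S \<times> {0..1}" by (rule AE_prob_1)
  then show ?thesis by eventually_elim auto
qed

lemma QAE': assumes x: "x \<in> space S" and P: "\<And>z. fst z \<in> space S \<Longrightarrow> 0 \<le> snd z \<Longrightarrow> snd z \<le> 1 \<Longrightarrow> P z"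
  shows "AE z in Q x b. P z"
  using QAE[OF x, of b] by (rule AE_mp) (use P in \<open>auto intro!: AE_I2\<close>)

lemma Qint: assumes x: "x \<in> space S" and f: "f \<in> borel_measurable (S \<Otimes>\<^sub>M borel)"
  and b: "AE z in Q x b. \<bar>f z\<bar> \<le> B" shows "integrable (Q x b) (f :: _ \<Rightarrow> real)"
proof -
  interpret prob_space "Q x b" using Qsp[OF x] by auto
  show ?thesis
    apply (rule integrable_const_bound[where B=B])
    using b apply simp
    using f measurable_cong_sets[OF Qsp(2)[OF x] refl] by auto
qed


definition bnd :: "('s \<Rightarrow> real) \<Rightarrow> real \<Rightarrow> bool" where
  "bnd h C \<longleftrightarrow> h \<in> borel_measurable S \<and> (\<forall>x\<in>space S. \<bar>h x\<bar> \<le> C)"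

lemma rr_bnd: "x \<in> space S \<Longrightarrow> 0 \<le> rr Q x b \<and> rr Q x b \<le> 1"
proof -
  assume x: "x \<in> space S"
  interpret prob_space "Q x b" using Qsp[OF x] by auto
  have i: "integrable (Q x b) snd" apply (rule Qint[OF x, where B=1])
     apply simp using QAE[OF x, of b] by eventually_elim auto
  have "0 \<le> rr Q x b" unfolding rr_def apply (rule integral_nonneg_AE)
    using QAE[OF x, of b] by eventually_elim auto
  moreover have "rr Q x b \<le> (\<integral>z. 1 \<partial>Q x b)" unfolding rr_def
    apply (rule integral_mono_AE[OF i]) apply simp using QAE[OF x, of b] by eventually_elim auto
  ultimately show ?thesis by (simp add: prob_space)
qed

lemma hint: "x \<in> space S \<Longrightarrow> bnd h C \<Longrightarrow> integrable (Q x b) (\<lambda>z. h (fst z))"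
  unfolding bnd_def by (rule Qint[where B=C]) (auto intro!: QAE')

lemma PP_bnd: "x \<in> space S \<Longrightarrow> bnd h C \<Longrightarrow> \<bar>PP Q b h x\<bar> \<le> C"
proof -
  assume x: "x \<in> space S" and h: "bnd h C"
  interpret prob_space "Q x b" using Qsp[OF x] by auto
  have "\<bar>PP Q b h x\<bar> \<le> (\<integral>z. \<bar>h (fst z)\<bar> \<partial>Q x b)" unfolding PP_def
    by (rule integral_abs_bound)
  also have "\<dots> \<le> (\<integral>z. C \<partial>Q x b)"
    apply (rule integral_mono_AE) using hint[OF x h] apply (simp add: integrable_abs)
     apply simp using h unfolding bnd_def by (auto intro!: QAE'[OF x])
  finally show ?thesis by (simp add: prob_space)
qed

lemma PP_mono: "x \<in> space S \<Longrightarrow> bnd f C \<Longrightarrow> bnd g D \<Longrightarrow> (\<forall>y\<in>space S. f y \<le> g y) \<Longrightarrow> PP Q b f x \<le> PP Q b g x"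
  unfolding PP_def by (rule integral_mono_AE) (use hint in \<open>auto intro!: QAE'\<close>)

lemma PP_diff: "x \<in> space S \<Longrightarrow> bnd f C \<Longrightarrow> bnd g D \<Longrightarrow> PP Q b f x - PP Q b g x = PP Q b (\<lambda>y. f y - g y) x"
  unfolding PP_def by (rule Bochner_Integration.integral_diff[symmetric]) (use hint in auto)

lemma PP_mult: "PP Q b (\<lambda>y. c * f y) x = c * PP Q b f x"
  unfolding PP_def by simp

lemma PP_meas: "bnd h C \<Longrightarrow> p \<in> S \<rightarrow>\<^sub>M count_space UNIV \<Longrightarrow> (\<lambda>x. PP Q (p x) h x) \<in> borel_measurable S"
  unfolding PP_def bnd_def
  apply (rule measurable_compose[OF Qpol[THEN measurable_prob_algebraD] integral_measurable_subprob_algebra])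
  by auto

lemma rr_meas: "p \<in> S \<rightarrow>\<^sub>M count_space UNIV \<Longrightarrow> (\<lambda>x. rr Q x (p x)) \<in> borel_measurable S"
  unfolding rr_def
  apply (rule measurable_compose[OF Qpol[THEN measurable_prob_algebraD] integral_measurable_subprob_algebra])
  by auto


definition actm :: "(nat \<Rightarrow> 's \<Rightarrow> 'b) \<Rightarrow> bool" where
  "actm act \<longleftrightarrow> (\<forall>n. act n \<in> S \<rightarrow>\<^sub>M count_space UNIV)"

lemma K_meas:
  assumes a: "act n \<in> S \<rightarrow>\<^sub>M count_space UNIV"
  shows "(\<lambda>(x, g). distr (Q x (act n x)) (S \<Otimes>\<^sub>M borel) (\<lambda>(x', r). (x', g + \<gamma> ^ n * r)))
     \<in> S \<Otimes>\<^sub>M borel \<rightarrow>\<^sub>M prob_algebra (S \<Otimes>\<^sub>M borel)"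
proof -
  have q[measurable]: "(\<lambda>y. Q (fst y) (act n (fst y))) \<in> S \<Otimes>\<^sub>M borel \<rightarrow>\<^sub>M prob_algebra (S \<Otimes>\<^sub>M borel)"
    by (rule measurable_compose[OF measurable_fst Qpol[OF a]])
  have "(\<lambda>y. distr (Q (fst y) (act n (fst y))) (S \<Otimes>\<^sub>M borel) (\<lambda>(x', r). (x', snd y + \<gamma> ^ n * r)))
     \<in> S \<Otimes>\<^sub>M borel \<rightarrow>\<^sub>M prob_algebra (S \<Otimes>\<^sub>M borel)"
    by measurable
  then show ?thesis by (simp add: split_beta')
qed

lemma traj_sp:
  assumes s: "s \<in> space S" and a: "actm act"
  shows "traj S Q \<gamma> act s n \<in> space (prob_algebra (S \<Otimes>\<^sub>M borel))"
proof (induction n)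
  case 0
  show ?case using s by (simp add: measurable_space[OF measurable_return_prob_space] space_pair_measure)
next
  case (Suc n)
  have K: "(\<lambda>(x, g). distr (Q x (act n x)) (S \<Otimes>\<^sub>M borel) (\<lambda>(x', r). (x', g + \<gamma> ^ n * r)))
     \<in> S \<Otimes>\<^sub>M borel \<rightarrow>\<^sub>M prob_algebra (S \<Otimes>\<^sub>M borel)"
    using K_meas a unfolding actm_def by blast
  show ?case
    using prob_space_bind'[OF Suc K] sets_bind'[OF Suc K] by (simp add: space_prob_algebra)
qed

lemma traj_space:
  assumes s: "s \<in> space S" and a: "actm act" and z: "z \<in> space (traj S Q \<gamma> act s n)"
  shows "fst z \<in> space S"
proof -
  have e: "sets (traj S Q \<gamma> act s n) = sets (S \<Otimes>\<^sub>M borel)"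
    using traj_sp[OF s a, of n] by (simp add: space_prob_algebra)
  have "space (traj S Q \<gamma> act s n) = space S \<times> UNIV"
    using sets_eq_imp_space_eq[OF e] by (simp add: space_pair_measure)
  then show ?thesis using z by auto
qed

lemma traj_AE:
  assumes s: "s \<in> space S" and a: "actm act"
  shows "AE z in traj S Q \<gamma> act s n. \<bar>snd z\<bar> \<le> real n"
proof (induction n)
  case 0
  show ?case unfolding traj.simps(1) using s by (subst AE_return) (auto simp: space_pair_measure)
next
  case (Suc n)
  have an: "act n \<in> S \<rightarrow>\<^sub>M count_space UNIV" using a unfolding actm_def by blast
  have e: "sets (traj S Q \<gamma> act s n) = sets (S \<Otimes>\<^sub>M borel)"
    using traj_sp[OF s a, of n] by (simp add: space_prob_algebra)
  note K = K_meas[of act n, OF an, THEN measurable_prob_algebraD, folded measurable_cong_sets[OF e refl]]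
  have P: "Measurable.pred (S \<Otimes>\<^sub>M borel) (\<lambda>z. \<bar>snd z\<bar> \<le> real (Suc n))" by measurable
  have "AE y in traj S Q \<gamma> act s n. AE z in (case y of (x, g) \<Rightarrow> distr (Q x (act n x)) (S \<Otimes>\<^sub>M borel) (\<lambda>(x', r). (x', g + \<gamma> ^ n * r))). \<bar>snd z\<bar> \<le> real (Suc n)"
    using Suc AE_space
  proof eventually_elim
    case (elim y)
    obtain x g where y: "y = (x, g)" by fastforce
    have x: "x \<in> space S" using traj_space[OF s a elim(2)] y by simp
    have m: "(\<lambda>(x', r). (x', g + \<gamma> ^ n * r)) \<in> Q x (act n x) \<rightarrow>\<^sub>M S \<Otimes>\<^sub>M borel"
      by (subst measurable_cong_sets[OF Qsp(2)[OF x] refl]) measurable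
    have gn: "\<gamma> ^ n \<le> 1" "0 \<le> \<gamma> ^ n" using g0 g1 by (auto intro: power_le_one)
    have "AE z in Q x (act n x). \<bar>g + \<gamma> ^ n * snd z\<bar> \<le> real (Suc n)"
    proof (rule QAE'[OF x])
      fix z :: "'s \<times> real" assume "0 \<le> snd z" "snd z \<le> 1"
      then have "0 \<le> \<gamma> ^ n * snd z" "\<gamma> ^ n * snd z \<le> 1" using gn by (auto intro: mult_le_one)
      then show "\<bar>g + \<gamma> ^ n * snd z\<bar> \<le> real (Suc n)" using elim(1) y by simp
    qed
    then have "AE z in distr (Q x (act n x)) (S \<Otimes>\<^sub>M borel) (\<lambda>(x', r). (x', g + \<gamma> ^ n * r)). \<bar>snd z\<bar> \<le> real (Suc n)"
      by (subst AE_distr_iff[OF m P[unfolded pred_def]]) (simp add: split_beta')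
    then show ?case unfolding y prod.case .
  qed
  then show ?case unfolding traj.simps(2) by (subst AE_bind[OF K P])
qed


lemma inner:
  assumes x: "x \<in> space S" and h: "bnd h C"
  shows "(\<integral>z. snd z + h (fst z) \<partial>distr (Q x b) (S \<Otimes>\<^sub>M borel) (\<lambda>(x', r). (x', g + c * r)))
     = g + c * rr Q x b + PP Q b h x"
proof -
  interpret prob_space "Q x b" using Qsp[OF x] by auto
  have hm[measurable]: "h \<in> borel_measurable S" using h unfolding bnd_def by auto
  have m: "(\<lambda>(x', r). (x', g + c * r)) \<in> Q x b \<rightarrow>\<^sub>M S \<Otimes>\<^sub>M borel"
    by (subst measurable_cong_sets[OF Qsp(2)[OF x] refl]) measurable
  have fm: "(\<lambda>z. snd z + h (fst z)) \<in> borel_measurable (S \<Otimes>\<^sub>M borel)" by measurable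
  have i1: "integrable (Q x b) snd" apply (rule Qint[OF x, where B=1]) by (auto intro!: QAE'[OF x])
  have i2: "integrable (Q x b) (\<lambda>z. h (fst z))" by (rule hint[OF x h])
  have "(\<integral>z. snd z + h (fst z) \<partial>distr (Q x b) (S \<Otimes>\<^sub>M borel) (\<lambda>(x', r). (x', g + c * r)))
      = (\<integral>z. (g + c * snd z) + h (fst z) \<partial>Q x b)"
    by (subst integral_distr[OF m fm]) (simp add: split_beta' add_ac)
  also have "\<dots> = (\<integral>z. g + c * snd z \<partial>Q x b) + (\<integral>z. h (fst z) \<partial>Q x b)"
    by (rule Bochner_Integration.integral_add) (use i1 i2 in auto)
  also have "(\<integral>z. g + c * snd z \<partial>Q x b) = (\<integral>z. g \<partial>Q x b) + (\<integral>z. c * snd z \<partial>Q x b)"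
    by (rule Bochner_Integration.integral_add) (use i1 in auto)
  finally show ?thesis by (simp add: rr_def PP_def prob_space)
qed

lemma traj_G:
  assumes s: "s \<in> space S" and a: "actm act"
  shows "bnd h C \<Longrightarrow> (\<integral>z. snd z + h (fst z) \<partial>traj S Q \<gamma> act s n) = comp Q \<gamma> act n h s"
proof (induction n arbitrary: h C)
  case 0
  have [measurable]: "h \<in> borel_measurable S" using 0 unfolding bnd_def by auto
  show ?case unfolding traj.simps(1) using s
    by (subst integral_return) (auto simp: space_pair_measure)
next
  case (Suc n)
  note h = Suc.prems
  have hm[measurable]: "h \<in> borel_measurable S" using h unfolding bnd_def by auto
  have an: "act n \<in> S \<rightarrow>\<^sub>M count_space UNIV" using a unfolding actm_def by blast
  have e: "sets (traj S Q \<gamma> act s n) = sets (S \<Otimes>\<^sub>M borel)"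
    using traj_sp[OF s a, of n] by (simp add: space_prob_algebra)
  have ps: "prob_space (traj S Q \<gamma> act s n)"
    using traj_sp[OF s a, of n] by (simp add: space_prob_algebra)
  note K0 = K_meas[of act n, OF an, THEN measurable_prob_algebraD]
  note K = K0[folded measurable_cong_sets[OF e refl]]
  define h' where "h' x = \<gamma>^n * rr Q x (act n x) + PP Q (act n x) h x" for x
  have gn: "\<gamma> ^ n \<le> 1" "0 \<le> \<gamma> ^ n" using g0 g1 by (auto intro: power_le_one)
  have h': "bnd h' (1 + C)" unfolding bnd_def
  proof
    show "h' \<in> borel_measurable S" unfolding h'_def
      using rr_meas[OF an] PP_meas[OF h an] by measurable
    show "\<forall>x\<in>space S. \<bar>h' x\<bar> \<le> 1 + C"
    proof
      fix x assume x: "x \<in> space S"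
      have "\<bar>\<gamma>^n * rr Q x (act n x)\<bar> \<le> 1" using rr_bnd[OF x, of "act n x"] gn
        by (auto simp: abs_mult intro: mult_le_one)
      then show "\<bar>h' x\<bar> \<le> 1 + C" using PP_bnd[OF x h, of "act n x"] unfolding h'_def by linarith
    qed
  qed
  have fm: "(\<lambda>z. snd z + h (fst z)) \<in> borel_measurable (S \<Otimes>\<^sub>M borel)" by measurable
  have P: "Measurable.pred (S \<Otimes>\<^sub>M borel) (\<lambda>z. \<bar>snd z\<bar> \<le> real (Suc n))" by measurable
  have A: "AE y in traj S Q \<gamma> act s n. AE z in (case y of (x, g) \<Rightarrow> distr (Q x (act n x)) (S \<Otimes>\<^sub>M borel) (\<lambda>(x', r). (x', g + \<gamma> ^ n * r))). \<bar>snd z\<bar> \<le> real (Suc n)"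
    using traj_AE[OF s a, of "Suc n"] unfolding traj.simps(2) by (subst (asm) AE_bind[OF K P])
  have B: "AE y in traj S Q \<gamma> act s n. AE z in (case y of (x, g) \<Rightarrow> distr (Q x (act n x)) (S \<Otimes>\<^sub>M borel) (\<lambda>(x', r). (x', g + \<gamma> ^ n * r))). \<bar>snd z + h (fst z)\<bar> \<le> real (Suc n) + C"
    using A AE_space
  proof eventually_elim
    case (elim y)
    have sy: "sets (case y of (x, g) \<Rightarrow> distr (Q x (act n x)) (S \<Otimes>\<^sub>M borel) (\<lambda>(x', r). (x', g + \<gamma> ^ n * r))) = sets (S \<Otimes>\<^sub>M borel)"
      using sets_kernel[OF K elim(2)] .
    have spy: "space (case y of (x, g) \<Rightarrow> distr (Q x (act n x)) (S \<Otimes>\<^sub>M borel) (\<lambda>(x', r). (x', g + \<gamma> ^ n * r))) = space S \<times> UNIV"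
      using sets_eq_imp_space_eq[OF sy] by (simp add: space_pair_measure)
    show ?case using elim(1) AE_space
    proof eventually_elim
      case (elim z)
      then have "fst z \<in> space S" using spy by auto
      then have "\<bar>h (fst z)\<bar> \<le> C" using h unfolding bnd_def by auto
      then show ?case using elim(1) by linarith
    qed
  qed
  have "(\<integral>z. snd z + h (fst z) \<partial>traj S Q \<gamma> act s (Suc n))
     = (\<integral>y. (\<integral>z. snd z + h (fst z) \<partial>(case y of (x, g) \<Rightarrow> distr (Q x (act n x)) (S \<Otimes>\<^sub>M borel) (\<lambda>(x', r). (x', g + \<gamma> ^ n * r)))) \<partial>traj S Q \<gamma> act s n)"
    unfolding traj.simps(2) by (rule integral_bind_AE[OF fm K ps B])
  also have "\<dots> = (\<integral>y. snd y + h' (fst y) \<partial>traj S Q \<gamma> act s n)"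
  proof (rule Bochner_Integration.integral_cong[OF refl])
    fix y assume y: "y \<in> space (traj S Q \<gamma> act s n)"
    obtain x g where yy: "y = (x, g)" by fastforce
    have x: "x \<in> space S" using traj_space[OF s a y] yy by simp
    show "(\<integral>z. snd z + h (fst z) \<partial>(case y of (x, g) \<Rightarrow> distr (Q x (act n x)) (S \<Otimes>\<^sub>M borel) (\<lambda>(x', r). (x', g + \<gamma> ^ n * r))))
        = snd y + h' (fst y)"
      unfolding yy prod.case using inner[OF x h, of "act n x" g "\<gamma>^n"] by (simp add: h'_def add_ac)
  qed
  also have "\<dots> = comp Q \<gamma> act n h' s" by (rule Suc.IH[OF h'])
  finally show ?case by (simp add: h'_def[abs_def])
qed


lemma comp_stat:
  assumes "\<forall>t\<ge>1. act t = p"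
  shows "comp Q \<gamma> act (Suc n) (\<lambda>x. \<gamma>^(Suc n) * h x) = TT Q \<gamma> (act 0) ((TT Q \<gamma> p ^^ n) h)"
  using assms
proof (induction n arbitrary: h)
  case 0
  show ?case by (simp add: TT_def PP_mult)
next
  case (Suc n)
  have "(\<lambda>x. \<gamma>^(Suc n) * rr Q x (act (Suc n) x) + PP Q (act (Suc n) x) (\<lambda>x. \<gamma>^(Suc (Suc n)) * h x) x)
      = (\<lambda>x. \<gamma>^(Suc n) * TT Q \<gamma> p h x)"
    using Suc.prems apply (simp only: PP_mult TT_def)
    by (simp add: algebra_simps)
  then have "comp Q \<gamma> act (Suc (Suc n)) (\<lambda>x. \<gamma>^(Suc (Suc n)) * h x) = comp Q \<gamma> act (Suc n) (\<lambda>x. \<gamma>^(Suc n) * TT Q \<gamma> p h x)"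
    by (simp only: comp.simps)
  also have "\<dots> = TT Q \<gamma> (act 0) ((TT Q \<gamma> p ^^ n) (TT Q \<gamma> p h))" by (rule Suc.IH[OF Suc.prems])
  finally show ?case by (simp add: funpow_Suc_right del: funpow.simps)
qed

lemma TT_apply: "TT Q \<gamma> b h x = rr Q x (b x) + \<gamma> * PP Q (b x) h x" unfolding TT_def by simp

lemma PP0: "PP Q b (\<lambda>x. 0) x = 0" unfolding PP_def by simp

lemma bnd0: "bnd (\<lambda>x. 0) 0" unfolding bnd_def by simp

context
  fixes p :: "'s \<Rightarrow> 'b" assumes pm: "p \<in> S \<rightarrow>\<^sub>M count_space UNIV"
begin

lemma TT_bnd: "bnd h C \<Longrightarrow> bnd (TT Q \<gamma> p h) (1 + \<gamma> * C)"
  unfolding bnd_def[of "TT Q \<gamma> p h"]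
proof
  assume h: "bnd h C"
  show "TT Q \<gamma> p h \<in> borel_measurable S" unfolding TT_def
    using rr_meas[OF pm] PP_meas[OF h pm] by measurable
  show "\<forall>x\<in>space S. \<bar>TT Q \<gamma> p h x\<bar> \<le> 1 + \<gamma> * C"
  proof
    fix x assume x: "x \<in> space S"
    have "\<bar>\<gamma> * PP Q (p x) h x\<bar> \<le> \<gamma> * C" using PP_bnd[OF x h] g0 by (simp add: abs_mult)
    then show "\<bar>TT Q \<gamma> p h x\<bar> \<le> 1 + \<gamma> * C" using rr_bnd[OF x, of "p x"] unfolding TT_def by linarith
  qed
qed

lemma iter_bnd: "bnd h C \<Longrightarrow> \<exists>C'. bnd ((TT Q \<gamma> p ^^ n) h) C'"
  by (induction n) (auto intro: TT_bnd)

lemma TT_mono: "bnd f C \<Longrightarrow> bnd g D \<Longrightarrow> \<forall>y\<in>space S. f y \<le> g y \<Longrightarrow> x \<in> space S \<Longrightarrow> TT Q \<gamma> p f x \<le> TT Q \<gamma> p g x"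
  unfolding TT_def using PP_mono[of x f C g D "p x"] g0 by (simp add: mult_left_mono)

lemma iter_mono: "bnd f C \<Longrightarrow> bnd g D \<Longrightarrow> \<forall>y\<in>space S. f y \<le> g y \<Longrightarrow> \<forall>x\<in>space S. (TT Q \<gamma> p ^^ n) f x \<le> (TT Q \<gamma> p ^^ n) g x"
proof (induction n)
  case (Suc n)
  obtain C' D' where "bnd ((TT Q \<gamma> p ^^ n) f) C'" "bnd ((TT Q \<gamma> p ^^ n) g) D'"
    using iter_bnd Suc.prems by blast
  then show ?case using TT_mono Suc by auto
qed simp

lemma TT_diff: "bnd f C \<Longrightarrow> bnd g D \<Longrightarrow> \<forall>y\<in>space S. \<bar>f y - g y\<bar> \<le> c \<Longrightarrow> x \<in> space S \<Longrightarrow> \<bar>TT Q \<gamma> p f x - TT Q \<gamma> p g x\<bar> \<le> \<gamma> * c"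
proof -
  assume f: "bnd f C" and g: "bnd g D" and c: "\<forall>y\<in>space S. \<bar>f y - g y\<bar> \<le> c" and x: "x \<in> space S"
  have fg: "bnd (\<lambda>y. f y - g y) c" using f g c unfolding bnd_def by auto
  have "TT Q \<gamma> p f x - TT Q \<gamma> p g x = \<gamma> * (PP Q (p x) f x - PP Q (p x) g x)"
    unfolding TT_def by (simp add: algebra_simps)
  also have "\<dots> = \<gamma> * PP Q (p x) (\<lambda>y. f y - g y) x" using PP_diff[OF x f g] by simp
  finally show ?thesis using PP_bnd[OF x fg] g0 by (simp add: abs_mult)
qed

lemma iter_diff: "bnd f C \<Longrightarrow> bnd g D \<Longrightarrow> \<forall>y\<in>space S. \<bar>f y - g y\<bar> \<le> c \<Longrightarrow> \<forall>x\<in>space S. \<bar>(TT Q \<gamma> p ^^ n) f x - (TT Q \<gamma> p ^^ n) g x\<bar> \<le> \<gamma>^n * c"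
proof (induction n)
  case (Suc n)
  obtain C' D' where "bnd ((TT Q \<gamma> p ^^ n) f) C'" "bnd ((TT Q \<gamma> p ^^ n) g) D'"
    using iter_bnd Suc.prems by blast
  then show ?case using TT_diff[of _ C' _ D' "\<gamma>^n * c"] Suc by (auto simp: mult.assoc)
qed simp

definition Bd where "Bd = 1 / (1 - \<gamma>)"

lemma Bd_eq: "1 + \<gamma> * Bd = Bd" using g1 unfolding Bd_def by (simp add: field_simps)

lemma V_bnd: "bnd ((TT Q \<gamma> p ^^ n) (\<lambda>x. 0)) Bd \<and> (\<forall>x\<in>space S. 0 \<le> (TT Q \<gamma> p ^^ n) (\<lambda>x. 0) x)"
proof (induction n)
  case 0
  show ?case using g1 by (simp add: bnd_def Bd_def)
next
  case (Suc n)
  have b: "bnd ((TT Q \<gamma> p ^^ Suc n) (\<lambda>x. 0)) (1 + \<gamma> * Bd)" using TT_bnd Suc by simp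
  have "\<forall>x\<in>space S. 0 \<le> (TT Q \<gamma> p ^^ Suc n) (\<lambda>x. 0) x"
  proof
    fix x assume x: "x \<in> space S"
    have "PP Q (p x) (\<lambda>x. 0) x \<le> PP Q (p x) ((TT Q \<gamma> p ^^ n) (\<lambda>x. 0)) x"
      using PP_mono[OF x bnd0, of _ Bd] Suc by auto
    then show "0 \<le> (TT Q \<gamma> p ^^ Suc n) (\<lambda>x. 0) x"
      using rr_bnd[OF x, of "p x"] g0 by (simp add: TT_def PP0)
  qed
  then show ?case using b Bd_eq by simp
qed

lemma V_inc: "x \<in> space S \<Longrightarrow> (TT Q \<gamma> p ^^ n) (\<lambda>x. 0) x \<le> (TT Q \<gamma> p ^^ Suc n) (\<lambda>x. 0) x"
proof -
  assume x: "x \<in> space S"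
  have "\<forall>x\<in>space S. (TT Q \<gamma> p ^^ n) (\<lambda>x. 0) x \<le> (TT Q \<gamma> p ^^ n) (TT Q \<gamma> p (\<lambda>x. 0)) x"
    apply (rule iter_mono[OF bnd0, of _ "1 + \<gamma> * 0"])
    using TT_bnd[OF bnd0] apply simp
    using V_bnd[of 1] by simp
  then show ?thesis using x by (simp add: funpow_Suc_right del: funpow.simps)
qed

lemma V_le: "x \<in> space S \<Longrightarrow> (TT Q \<gamma> p ^^ n) (\<lambda>x. 0) x \<le> Bd"
  using V_bnd[of n] unfolding bnd_def by (auto simp: abs_le_iff)

lemma V_ge: "x \<in> space S \<Longrightarrow> 0 \<le> (TT Q \<gamma> p ^^ n) (\<lambda>x. 0) x"
  using V_bnd[of n] by auto

definition vlim where "vlim x = lim (\<lambda>n. (TT Q \<gamma> p ^^ n) (\<lambda>x. 0) x)"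

lemma V_conv: "x \<in> space S \<Longrightarrow> (\<lambda>n. (TT Q \<gamma> p ^^ n) (\<lambda>x. 0) x) \<longlonglongrightarrow> vlim x"
proof -
  assume x: "x \<in> space S"
  have "incseq (\<lambda>n. (TT Q \<gamma> p ^^ n) (\<lambda>x. 0) x)" by (rule incseq_SucI) (rule V_inc[OF x])
  moreover have "\<forall>n. (TT Q \<gamma> p ^^ n) (\<lambda>x. 0) x \<le> Bd" using V_le x by blast
  ultimately obtain L where "(\<lambda>n. (TT Q \<gamma> p ^^ n) (\<lambda>x. 0) x) \<longlonglongrightarrow> L" using incseq_convergent by blast
  then show ?thesis unfolding vlim_def using limI by metis
qed

lemma vlim_bnd: "bnd vlim Bd" and vlim_nonneg: "x \<in> space S \<Longrightarrow> 0 \<le> vlim x"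
proof -
  show "bnd vlim Bd" unfolding bnd_def
  proof
    show "vlim \<in> borel_measurable S"
      by (rule borel_measurable_LIMSEQ_real[OF V_conv]) (use V_bnd in \<open>auto simp: bnd_def\<close>)
    show "\<forall>x\<in>space S. \<bar>vlim x\<bar> \<le> Bd"
    proof
      fix x assume x: "x \<in> space S"
      have "vlim x \<le> Bd" by (rule LIMSEQ_le_const2[OF V_conv[OF x]]) (use V_le x in auto)
      moreover have "0 \<le> vlim x" by (rule LIMSEQ_le_const[OF V_conv[OF x]]) (use V_bnd x in auto)
      ultimately show "\<bar>vlim x\<bar> \<le> Bd" by simp
    qed
  qed
  show "x \<in> space S \<Longrightarrow> 0 \<le> vlim x" by (rule LIMSEQ_le_const[OF V_conv]) (use V_bnd in auto)
qed

lemma PP_lim: "x \<in> space S \<Longrightarrow> (\<lambda>n. PP Q a ((TT Q \<gamma> p ^^ n) (\<lambda>x. 0)) x) \<longlonglongrightarrow> PP Q a vlim x"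
proof -
  assume x: "x \<in> space S"
  interpret prob_space "Q x a" using Qsp[OF x] by auto
  have ms: "\<And>h C. bnd h C \<Longrightarrow> (\<lambda>z. h (fst z)) \<in> borel_measurable (Q x a)"
    by (subst measurable_cong_sets[OF Qsp(2)[OF x] refl]) (auto simp: bnd_def)
  show ?thesis unfolding PP_def
  proof (rule integral_dominated_convergence[where w="\<lambda>z. Bd"])
    show "(\<lambda>z. vlim (fst z)) \<in> borel_measurable (Q x a)" by (rule ms[OF vlim_bnd])
    show "(\<lambda>z. (TT Q \<gamma> p ^^ n) (\<lambda>x. 0) (fst z)) \<in> borel_measurable (Q x a)" for n
      using V_bnd ms by blast
    show "integrable (Q x a) (\<lambda>z. Bd)" by simp
    show "AE z in Q x a. (\<lambda>n. (TT Q \<gamma> p ^^ n) (\<lambda>x. 0) (fst z)) \<longlonglongrightarrow> vlim (fst z)"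
      by (rule QAE'[OF x]) (rule V_conv)
    show "AE z in Q x a. norm ((TT Q \<gamma> p ^^ n) (\<lambda>x. 0) (fst z)) \<le> Bd" for n
      by (rule QAE'[OF x]) (use V_le V_ge in auto)
  qed
qed

lemma TT_lim: "x \<in> space S \<Longrightarrow> (\<lambda>n. TT Q \<gamma> b ((TT Q \<gamma> p ^^ n) (\<lambda>x. 0)) x) \<longlonglongrightarrow> TT Q \<gamma> b vlim x"
  by (simp only: TT_apply) (intro tendsto_intros PP_lim)

lemma bellman: "x \<in> space S \<Longrightarrow> TT Q \<gamma> p vlim x = vlim x"
proof -
  assume x: "x \<in> space S"
  have "(\<lambda>n. (TT Q \<gamma> p ^^ Suc n) (\<lambda>x. 0) x) \<longlonglongrightarrow> TT Q \<gamma> p vlim x"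
    using TT_lim[OF x, of p] by simp
  moreover have "(\<lambda>n. (TT Q \<gamma> p ^^ Suc n) (\<lambda>x. 0) x) \<longlonglongrightarrow> vlim x"
    using V_conv[OF x] by (rule LIMSEQ_Suc)
  ultimately show ?thesis by (rule LIMSEQ_unique)
qed

lemma vfun_eq: "x \<in> space S \<Longrightarrow> vfun S Q \<gamma> p x = vlim x"
proof -
  assume x: "x \<in> space S"
  have a: "actm (\<lambda>t x. p x)" unfolding actm_def using pm by simp
  have "(\<integral>z. snd z \<partial>traj S Q \<gamma> (\<lambda>t x. p x) x n) = (TT Q \<gamma> p ^^ n) (\<lambda>x. 0) x" for n
  proof -
    have "(\<integral>z. snd z \<partial>traj S Q \<gamma> (\<lambda>t x. p x) x n) = comp Q \<gamma> (\<lambda>t x. p x) n (\<lambda>x. 0) x"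
      using traj_G[OF x a bnd0, of n] by simp
    also have "\<dots> = (TT Q \<gamma> p ^^ n) (\<lambda>x. 0) x"
    proof (cases n)
      case (Suc m)
      then show ?thesis using comp_stat[of "\<lambda>t x. p x" p m "\<lambda>x. 0"] by simp
    qed simp
    finally show ?thesis .
  qed
  then show ?thesis unfolding vfun_def using V_conv[OF x] limI by simp
qed

lemma qfun_eq: "x \<in> space S \<Longrightarrow> qfun S Q \<gamma> p x a = TT Q \<gamma> (\<lambda>y. a) vlim x"
proof -
  assume x: "x \<in> space S"
  define act :: "nat \<Rightarrow> 's \<Rightarrow> 'b" where "act = (\<lambda>t x. if t = 0 then a else p x)"
  have a: "actm act" unfolding actm_def act_def
  proof
    fix n :: nat show "(\<lambda>x. if n = 0 then a else p x) \<in> S \<rightarrow>\<^sub>M count_space UNIV"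
      using pm by (cases n) auto
  qed
  have st: "\<forall>t\<ge>1. act t = p" unfolding act_def by auto
  have a0: "act 0 = (\<lambda>y. a)" unfolding act_def by simp
  have e: "(\<integral>z. snd z \<partial>traj S Q \<gamma> act x (Suc m)) = TT Q \<gamma> (\<lambda>y. a) ((TT Q \<gamma> p ^^ m) (\<lambda>x. 0)) x" for m
  proof -
    have "(\<integral>z. snd z \<partial>traj S Q \<gamma> act x (Suc m)) = comp Q \<gamma> act (Suc m) (\<lambda>x. 0) x"
      using traj_G[OF x a bnd0, of "Suc m"] by simp
    also have "\<dots> = TT Q \<gamma> (\<lambda>y. a) ((TT Q \<gamma> p ^^ m) (\<lambda>x. 0)) x"
      using comp_stat[OF st, of m "\<lambda>x. 0"] a0 by simp
    finally show ?thesis .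
  qed
  have "(\<lambda>m. (\<integral>z. snd z \<partial>traj S Q \<gamma> act x (Suc m))) \<longlonglongrightarrow> TT Q \<gamma> (\<lambda>y. a) vlim x"
    unfolding e by (rule TT_lim[OF x])
  then have "(\<lambda>m. (\<integral>z. snd z \<partial>traj S Q \<gamma> act x m)) \<longlonglongrightarrow> TT Q \<gamma> (\<lambda>y. a) vlim x"
    by (rule LIMSEQ_imp_Suc)
  then show ?thesis unfolding qfun_def act_def[symmetric] by (rule limI)
qed

end

end

theorem lemma3p1:
  fixes S :: "'s measure"
    and Q :: "'s \<Rightarrow> 'b::{finite,linorder} \<Rightarrow> ('s \<times> real) measure"
    and \<gamma> \<omega> :: real and \<pi> :: "'s \<Rightarrow> 'b" and qh :: "'s \<Rightarrow> 'b \<Rightarrow> real" and Sfix :: "'s set"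
  assumes "mdp S Q"
    and "0 < \<gamma>" and "\<gamma> < 1"
    and "\<pi> \<in> S \<rightarrow>\<^sub>M count_space UNIV"
    and "0 < \<omega>"
    and "Sfix \<subseteq> space S"
    and "capi qh \<pi> \<omega> Sfix \<in> S \<rightarrow>\<^sub>M count_space UNIV"
    and "\<forall>s\<in>space S - Sfix. \<forall>a. \<bar>qh s a - qfun S Q \<gamma> \<pi> s a\<bar> \<le> \<omega>"
  shows "\<forall>s\<in>space S. vfun S Q \<gamma> (capi qh \<pi> \<omega> Sfix) s \<ge> vfun S Q \<gamma> \<pi> s"
proof -
  interpret M S Q \<gamma> using assms(1-3) by unfold_locales
  note pm = assms(4) and p'm = assms(7) and hyp = assms(8)
  define p' where "p' = capi qh \<pi> \<omega> Sfix"
  note p'm = p'm[folded p'_def]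
  define v where "v = vlim \<pi>"
  have bv: "bnd v Bd" unfolding v_def by (rule vlim_bnd[OF pm])
  have greedy_max: "qh x (greedy qh x) = Max (range (qh x))" for x
  proof -
    have fin: "finite (range (qh x))" by simp
    have "Max (range (qh x)) \<in> range (qh x)" by (rule Max_in) auto
    then obtain a0 where a0: "qh x a0 = Max (range (qh x))" by (metis imageE)
    have "\<forall>b. qh x b \<le> qh x a0" using a0 fin by simp
    then have ex: "\<exists>a. \<forall>b. qh x b \<le> qh x a" by blast
    have "greedy qh x = Min {a. \<forall>b. qh x b \<le> qh x a}" unfolding greedy_def
      by (rule Least_Min[OF _ ex]) simp
    also have "\<dots> \<in> {a. \<forall>b. qh x b \<le> qh x a}" by (rule Min_in) (use ex in auto)
    finally have "\<forall>b. qh x b \<le> qh x (greedy qh x)" by simp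
    then show ?thesis using a0 fin by (metis Max_ge UNIV_I image_eqI order_antisym)
  qed
  have impr: "v x \<le> TT Q \<gamma> p' v x" if x: "x \<in> space S" for x
  proof (cases "x \<notin> Sfix \<and> qh x (\<pi> x) + \<omega> < Max (range (qh x)) - \<omega>")
    case True
    let ?g = "greedy qh x"
    have px: "p' x = ?g" using True unfolding p'_def capi_def by simp
    have xs: "x \<in> space S - Sfix" using True x by simp
    have "v x = TT Q \<gamma> \<pi> v x" unfolding v_def by (rule bellman[OF pm x, symmetric])
    also have "\<dots> = qfun S Q \<gamma> \<pi> x (\<pi> x)" unfolding v_def qfun_eq[OF pm x] by (simp add: TT_apply)
    also have "\<dots> \<le> qh x (\<pi> x) + \<omega>"
      using bspec[OF hyp xs, THEN spec[of _ "\<pi> x"]] by (simp add: abs_le_iff)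
    also have "\<dots> \<le> qh x ?g - \<omega>" using True greedy_max by simp
    also have "\<dots> \<le> qfun S Q \<gamma> \<pi> x ?g"
      using bspec[OF hyp xs, THEN spec[of _ ?g]] by (simp add: abs_le_iff)
    also have "\<dots> = TT Q \<gamma> p' v x" unfolding v_def qfun_eq[OF pm x] by (simp add: TT_apply px)
    finally show ?thesis .
  next
    case False
    then have px: "p' x = \<pi> x" unfolding p'_def capi_def by auto
    have "v x = TT Q \<gamma> \<pi> v x" unfolding v_def by (rule bellman[OF pm x, symmetric])
    also have "\<dots> = TT Q \<gamma> p' v x" by (simp add: TT_apply px)
    finally show ?thesis by simp
  qed
  have it: "\<forall>x\<in>space S. v x \<le> (TT Q \<gamma> p' ^^ n) v x" for n
  proof (induction n)
    case (Suc n)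
    obtain C' where C': "bnd ((TT Q \<gamma> p' ^^ n) v) C'" using iter_bnd[OF p'm bv] by blast
    show ?case
    proof
      fix x assume x: "x \<in> space S"
      have "v x \<le> TT Q \<gamma> p' v x" by (rule impr[OF x])
      also have "\<dots> \<le> TT Q \<gamma> p' ((TT Q \<gamma> p' ^^ n) v) x" by (rule TT_mono[OF p'm bv C' Suc x])
      finally show "v x \<le> (TT Q \<gamma> p' ^^ Suc n) v x" by simp
    qed
  qed simp
  have dif: "\<forall>x\<in>space S. \<bar>(TT Q \<gamma> p' ^^ n) v x - (TT Q \<gamma> p' ^^ n) (\<lambda>x. 0) x\<bar> \<le> \<gamma>^n * Bd" for n
    by (rule iter_diff[OF p'm bv bnd0]) (use bv in \<open>auto simp: bnd_def\<close>)
  show ?thesis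
  proof
    fix x assume x: "x \<in> space S"
    have "(\<lambda>n. (TT Q \<gamma> p' ^^ n) (\<lambda>x. 0) x + \<gamma>^n * Bd) \<longlonglongrightarrow> vlim p' x + 0 * Bd"
      by (intro tendsto_intros V_conv[OF p'm x] LIMSEQ_power_zero) (use assms(2,3) in auto)
    moreover have "\<forall>n. v x \<le> (TT Q \<gamma> p' ^^ n) (\<lambda>x. 0) x + \<gamma>^n * Bd"
    proof
      fix n
      have a: "v x \<le> (TT Q \<gamma> p' ^^ n) v x" using it x by blast
      have b: "\<bar>(TT Q \<gamma> p' ^^ n) v x - (TT Q \<gamma> p' ^^ n) (\<lambda>x. 0) x\<bar> \<le> \<gamma>^n * Bd" using dif x by blast
      show "v x \<le> (TT Q \<gamma> p' ^^ n) (\<lambda>x. 0) x + \<gamma>^n * Bd" using a b unfolding abs_le_iff by linarith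
    qed
    ultimately have "v x \<le> vlim p' x + 0 * Bd" by (intro LIMSEQ_le_const) auto
    then show "vfun S Q \<gamma> \<pi> x \<le> vfun S Q \<gamma> (capi qh \<pi> \<omega> Sfix) x"
      using vfun_eq[OF pm x] vfun_eq[OF p'm x] unfolding v_def p'_def by simp
  qed
qed

end
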